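(* Let $N$ be a phylogenetic network on $X\subseteq[n]$ and let $(i,j)$ be a reducible pair in $N$. Then $\boldsymbol\mu(N^{(i,j)})=\boldsymbol\mu(N)^{(i,j)}$ as multisets, where $\boldsymbol\mu(N)^{(i,j)}$ is the cherry-reduction of $\boldsymbol\mu(N)$ if $(i,j)$ is a cherry of $N$ and the reticulated-cherry-reduction of $\boldsymbol\mu(N)$ if $(i,j)$ is a reticulated-cherry of $N$.
   Context: A (binary) phylogenetic network on a finite set $X\subseteq[n]=\{1,\dots,n\}$ is a directed acyclic graph $N=(V,A)$ without parallel arcs in which every node is exactly one of: the root (indegree 0, outdegree 1; there is exactly one), a leaf (indegree 1, outdegree 0), a tree node (indegree 1, outdegree 2), or a reticulation (indegree 2, outdegree 1); the leaves are identified with the elements of $X$. $V_T(N)$ denotes the set of leaves and tree nodes, $V_H(N)$ the set of reticulations. $m(u,v)$ is the number of directed paths from $u$ to $v$ (trivial paths allowed). Extended $\mu$-vectors: $\mu_i(u)=m(u,i)$ for $i\in[n]$ (0 if $i\notin X$), $\mu_0(u)=\sum_{h\in V_H(N)} m(u,h)$, $\mu(u)=(\mu_0(u),\dots,\mu_n(u))$; $\boldsymbol\mu(N)$ is the multiset $\{\mu(u)\mid u\in V_T(N)\}$ (with multiplicities). $\delta_S$ is the 0/1 indicator vector of $S\subseteq\{0,\dots,n\}$ and $\delta_{j_1,\dots,j_k}=\delta_{\{j_1,\dots,j_k\}}$. For distinct leaves $i,j$ with parents $p_i,p_j$: $(i,j)$ is a cherry of $N$ if $p_i=p_j$; a reticulated-cherry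 of $N$ if $p_i$ is a reticulation, $p_j$ is a tree node and $p_j$ is a parent of $p_i$; reducible if either. Suppressing a node with indegree 1 and outdegree 1 means deleting it and its two arcs and adding an arc from its parent to its child. The reduction $N^{(i,j)}$: if $(i,j)$ is a cherry, delete leaf $i$ and its incoming arc, then suppress $p_i$; if it is a reticulated-cherry, delete the arc $p_jp_i$ and suppress $p_i$ and $p_j$. The result is a network on $X\setminus\{i\}$ in the first case and on $X$ in the second. For a finite multiset $\boldsymbol\mu$ of vectors of nonnegative integers indexed by $0,\dots,n$: the cherry-reduction with respect to $(i,j)$ is the multiset $\{\mu-\mu_i\delta_i \mid \mu\in\boldsymbol\mu\setminus\{\delta_i,\delta_{i,j}\}\}$ (one copy of $\delta_i$ and of $\delta_{i,j}$ removed); the reticulated-cherry-reduction with respect to $(i,j)$ is the multiset $\{\mu-\mu_i\delta_0-\mu_j\delta_i\mid \mu\in\boldsymbol\mu\setminus\{\delta_{0,i,j}\}\}$ (one copy of $\delta_{0,i,j}$ removed), where $\mu=(\mu_0,\dots,\mu_n)$. *)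

theory Defs
  imports Main "HOL-Library.Multiset"
begin

(* Networks: nodes are natural numbers, leaves are literally the labels in X \<subseteq> {1..n};
   arcs form a multiset (so that reductions, which may in degenerate cases create
   parallel arcs, are still represented faithfully for path counting). *)

definition indeg :: "(nat \<times> nat) multiset \<Rightarrow> nat \<Rightarrow> nat" where
  "indeg A v = size (filter_mset (\<lambda>e. snd e = v) A)"

definition outdeg :: "(nat \<times> nat) multiset \<Rightarrow> nat \<Rightarrow> nat" where
  "outdeg A v = size (filter_mset (\<lambda>e. fst e = v) A)"

definition is_root :: "(nat \<times> nat) multiset \<Rightarrow> nat \<Rightarrow> bool" where
  "is_root A v \<longleftrightarrow> indeg A v = 0 \<and> outdeg A v = 1"
definition is_leaf :: "(nat \<times> nat) multiset \<Rightarrow> nat \<Rightarrow> bool" where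
  "is_leaf A v \<longleftrightarrow> indeg A v = 1 \<and> outdeg A v = 0"
definition is_tree_node :: "(nat \<times> nat) multiset \<Rightarrow> nat \<Rightarrow> bool" where
  "is_tree_node A v \<longleftrightarrow> indeg A v = 1 \<and> outdeg A v = 2"
definition is_retic :: "(nat \<times> nat) multiset \<Rightarrow> nat \<Rightarrow> bool" where
  "is_retic A v \<longleftrightarrow> indeg A v = 2 \<and> outdeg A v = 1"

definition leaves :: "nat set \<Rightarrow> (nat \<times> nat) multiset \<Rightarrow> nat set" where
  "leaves V A = {v \<in> V. is_leaf A v}"
definition VT :: "nat set \<Rightarrow> (nat \<times> nat) multiset \<Rightarrow> nat set" where
  "VT V A = {v \<in> V. is_leaf A v \<or> is_tree_node A v}"
definition VH :: "nat set \<Rightarrow> (nat \<times> nat) multiset \<Rightarrow> nat set" where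
  "VH V A = {v \<in> V. is_retic A v}"

definition phylo_network :: "nat \<Rightarrow> nat set \<Rightarrow> (nat \<times> nat) multiset \<Rightarrow> nat set \<Rightarrow> bool" where
  "phylo_network n V A X \<longleftrightarrow>
     finite V \<and> set_mset A \<subseteq> V \<times> V \<and> (\<forall>e. count A e \<le> 1) \<and> acyclic (set_mset A) \<and>
     (\<exists>!r. r \<in> V \<and> is_root A r) \<and>
     (\<forall>v\<in>V. is_root A v \<or> is_leaf A v \<or> is_tree_node A v \<or> is_retic A v) \<and>
     leaves V A = X \<and> X \<subseteq> {1..n}"

definition npaths :: "nat set \<Rightarrow> (nat \<times> nat) multiset \<Rightarrow> nat \<Rightarrow> nat \<Rightarrow> nat" where
  "npaths V A u v = (\<Sum>xs \<in> {xs. xs \<noteq> [] \<and> hd xs = u \<and> last xs = v \<and> distinct xs \<and> set xs \<subseteq> V}.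
       prod_list (map (count A) (zip xs (tl xs))))"

(* extended mu-vector, indexed 0..n, as a function nat \<Rightarrow> nat (zero beyond n) *)
definition mu :: "nat \<Rightarrow> nat set \<Rightarrow> (nat \<times> nat) multiset \<Rightarrow> nat \<Rightarrow> nat \<Rightarrow> nat" where
  "mu n V A u = (\<lambda>k. if k = 0 then (\<Sum>h \<in> VH V A. npaths V A u h)
                     else if k \<le> n \<and> k \<in> leaves V A then npaths V A u k else 0)"

definition mu_multiset :: "nat \<Rightarrow> nat set \<Rightarrow> (nat \<times> nat) multiset \<Rightarrow> (nat \<Rightarrow> nat) multiset" where
  "mu_multiset n V A = image_mset (mu n V A) (mset_set (VT V A))"

definition delta :: "nat set \<Rightarrow> nat \<Rightarrow> nat" where
  "delta S = (\<lambda>k. if k \<in> S then 1 else 0)"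

definition cherry_red_ms :: "(nat \<Rightarrow> nat) multiset \<Rightarrow> nat \<Rightarrow> nat \<Rightarrow> (nat \<Rightarrow> nat) multiset" where
  "cherry_red_ms M i j =
     image_mset (\<lambda>m k. m k - m i * delta {i} k) (M - {#delta {i}, delta {i, j}#})"

definition retic_red_ms :: "(nat \<Rightarrow> nat) multiset \<Rightarrow> nat \<Rightarrow> nat \<Rightarrow> (nat \<Rightarrow> nat) multiset" where
  "retic_red_ms M i j =
     image_mset (\<lambda>m k. m k - m i * delta {0} k - m j * delta {i} k) (M - {#delta {0, i, j}#})"

definition parent :: "(nat \<times> nat) multiset \<Rightarrow> nat \<Rightarrow> nat" where
  "parent A v = (SOME p. (p, v) \<in># A)"

definition child :: "(nat \<times> nat) multiset \<Rightarrow> nat \<Rightarrow> nat" where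
  "child A v = (SOME c. (v, c) \<in># A)"

definition suppress :: "nat set \<Rightarrow> (nat \<times> nat) multiset \<Rightarrow> nat \<Rightarrow> nat set \<times> (nat \<times> nat) multiset" where
  "suppress V A v = (let p = parent A v; c = child A v in
      (V - {v}, A - {#(p, v), (v, c)#} + {#(p, c)#}))"

definition is_cherry :: "nat set \<Rightarrow> (nat \<times> nat) multiset \<Rightarrow> nat \<Rightarrow> nat \<Rightarrow> bool" where
  "is_cherry V A i j \<longleftrightarrow> i \<noteq> j \<and> i \<in> leaves V A \<and> j \<in> leaves V A \<and> parent A i = parent A j"

definition is_retic_cherry :: "nat set \<Rightarrow> (nat \<times> nat) multiset \<Rightarrow> nat \<Rightarrow> nat \<Rightarrow> bool" where
  "is_retic_cherry V A i j \<longleftrightarrow> i \<noteq> j \<and> i \<in> leaves V A \<and> j \<in> leaves V A \<and>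
     is_retic A (parent A i) \<and> is_tree_node A (parent A j) \<and> (parent A j, parent A i) \<in># A"

definition cherry_reduce :: "nat set \<Rightarrow> (nat \<times> nat) multiset \<Rightarrow> nat \<Rightarrow> nat \<Rightarrow> nat set \<times> (nat \<times> nat) multiset" where
  "cherry_reduce V A i j = suppress (V - {i}) (A - {#(parent A i, i)#}) (parent A i)"

definition retic_reduce :: "nat set \<Rightarrow> (nat \<times> nat) multiset \<Rightarrow> nat \<Rightarrow> nat \<Rightarrow> nat set \<times> (nat \<times> nat) multiset" where
  "retic_reduce V A i j =
     (let VA1 = suppress V (A - {#(parent A j, parent A i)#}) (parent A i)
      in suppress (fst VA1) (snd VA1) (parent A j))"

definition net_reduce :: "nat set \<Rightarrow> (nat \<times> nat) multiset \<Rightarrow> nat \<Rightarrow> nat \<Rightarrow> nat set \<times> (nat \<times> nat) multiset" where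
  "net_reduce V A i j = (if is_cherry V A i j then cherry_reduce V A i j else retic_reduce V A i j)"

definition mu_reduce :: "nat set \<Rightarrow> (nat \<times> nat) multiset \<Rightarrow> nat \<Rightarrow> nat \<Rightarrow> (nat \<Rightarrow> nat) multiset \<Rightarrow> (nat \<Rightarrow> nat) multiset" where
  "mu_reduce V A i j M = (if is_cherry V A i j then cherry_red_ms M i j else retic_red_ms M i j)"

end

theory Submission
  imports Defs
begin


abbreviation W :: "(nat \<times> nat) multiset \<Rightarrow> nat list \<Rightarrow> nat" where
  "W A xs \<equiv> prod_list (map (count A) (zip xs (tl xs)))"

lemma W_snoc: "W A (a # xs @ [v]) = W A (a # xs) * count A (last (a # xs), v)"
  by (induction xs arbitrary: a) auto

lemma W_reach: "W A xs \<noteq> 0 \<Longrightarrow> xs \<noteq> [] \<Longrightarrow> x \<in> set xs \<Longrightarrow> (x, last xs) \<in> (set_mset A)\<^sup>*"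
proof (induction xs arbitrary: x)
  case Nil then show ?case by simp
next
  case (Cons a xs)
  show ?case
  proof (cases xs)
    case Nil then show ?thesis using Cons by simp
  next
    case (Cons b ys)
    have "count A (a, b) \<noteq> 0" "W A xs \<noteq> 0" using Cons.prems \<open>xs = b # ys\<close> by auto
    then have ab: "(a, b) \<in> set_mset A" by (simp add: count_eq_zero_iff)
    have IH: "\<And>y. y \<in> set xs \<Longrightarrow> (y, last xs) \<in> (set_mset A)\<^sup>*"
      using Cons.IH \<open>W A xs \<noteq> 0\<close> \<open>xs = b # ys\<close> by auto
    have "(b, last xs) \<in> (set_mset A)\<^sup>*" using IH \<open>xs = b # ys\<close> by simp
    with ab have "(a, last xs) \<in> (set_mset A)\<^sup>*" by (meson converse_rtrancl_into_rtrancl)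
    then show ?thesis using Cons.prems IH \<open>xs = b # ys\<close> by auto
  qed
qed

definition PS :: "nat set \<Rightarrow> nat \<Rightarrow> nat \<Rightarrow> nat list set" where
  "PS V u v = {xs. xs \<noteq> [] \<and> hd xs = u \<and> last xs = v \<and> distinct xs \<and> set xs \<subseteq> V}"

lemma npaths_PS: "npaths V A u v = (\<Sum>xs\<in>PS V u v. W A xs)"
  unfolding npaths_def PS_def by simp

lemma finite_PS: "finite V \<Longrightarrow> finite (PS V u v)"
  unfolding PS_def
  by (rule finite_subset[OF _ finite_subset_distinct[of V]]) auto

lemma npaths_reach: "npaths V A u v \<noteq> 0 \<Longrightarrow> (u, v) \<in> (set_mset A)\<^sup>*"
proof -
  assume "npaths V A u v \<noteq> 0"
  then obtain xs where "xs \<in> PS V u v" "W A xs \<noteq> 0"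
    unfolding npaths_PS by (meson sum.not_neutral_contains_not_neutral)
  then show ?thesis using W_reach[of A xs "hd xs"] unfolding PS_def by auto
qed

lemma distinct_hd_last: "distinct xs \<Longrightarrow> xs \<noteq> [] \<Longrightarrow> hd xs = last xs \<Longrightarrow> xs = [hd xs]"
  by (cases xs) (auto split: if_splits)

lemma npaths_self: "v \<in> V \<Longrightarrow> npaths V A v v = 1"
proof -
  assume "v \<in> V"
  have "PS V v v = {[v]}" unfolding PS_def using \<open>v \<in> V\<close>
    by (auto dest: distinct_hd_last)
  then show ?thesis unfolding npaths_PS by simp
qed

lemma npaths_step:
  assumes fin: "finite V" and AV: "set_mset A \<subseteq> V \<times> V" and ac: "acyclic (set_mset A)"
    and u: "u \<in> V" and v_in: "v \<in> V" and uv: "u \<noteq> v"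
  shows "npaths V A u v = (\<Sum>w\<in>V. count A (w, v) * npaths V A u w)"
proof -
  define T where "T = {ys. ys \<noteq> [] \<and> hd ys = u \<and> distinct ys \<and> set ys \<subseteq> V}"
  define T1 where "T1 = {ys \<in> T. v \<notin> set ys}"
  have finT: "finite T" unfolding T_def
    by (rule finite_subset[OF _ finite_subset_distinct[of V]]) (auto simp: fin)
  have "(\<Sum>w\<in>V. count A (w, v) * npaths V A u w)
      = (\<Sum>w\<in>V. \<Sum>ys\<in>{ys \<in> T. last ys = w}. count A (last ys, v) * W A ys)"
  proof (rule sum.cong[OF refl])
    fix w assume "w \<in> V"
    have "PS V u w = {ys \<in> T. last ys = w}" unfolding PS_def T_def by auto
    then show "count A (w, v) * npaths V A u w = (\<Sum>ys\<in>{ys \<in> T. last ys = w}. count A (last ys, v) * W A ys)"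
      unfolding npaths_PS by (simp add: sum_distrib_left)
  qed
  also have "\<dots> = (\<Sum>ys\<in>T. count A (last ys, v) * W A ys)"
    by (rule sum.group[OF finT fin]) (auto simp: T_def)
  also have "\<dots> = (\<Sum>ys\<in>T1. count A (last ys, v) * W A ys)"
  proof (rule sum.mono_neutral_right[OF finT])
    show "T1 \<subseteq> T" unfolding T1_def by auto
    show "\<forall>ys\<in>T - T1. count A (last ys, v) * W A ys = 0"
    proof
      fix ys assume ys: "ys \<in> T - T1"
      show "count A (last ys, v) * W A ys = 0"
      proof (rule ccontr)
        assume "count A (last ys, v) * W A ys \<noteq> 0"
        then have c: "(last ys, v) \<in> set_mset A" and w: "W A ys \<noteq> 0"
          by (auto simp: count_eq_zero_iff)
        have "(v, last ys) \<in> (set_mset A)\<^sup>*" using W_reach[OF w] ys unfolding T1_def T_def by auto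
        with c have "(v, v) \<in> (set_mset A)\<^sup>+" by (meson rtrancl_into_trancl1)
        with ac show False unfolding acyclic_def by blast
      qed
    qed
  qed
  also have "\<dots> = (\<Sum>xs\<in>PS V u v. W A xs)"
  proof (rule sum.reindex_bij_witness[where i = butlast and j = "\<lambda>ys. ys @ [v]"])
    fix ys assume ys: "ys \<in> T1"
    then show "butlast (ys @ [v]) = ys" by simp
    show "ys @ [v] \<in> PS V u v" using ys v_in unfolding T1_def T_def PS_def by auto
    obtain a zs where "ys = a # zs" using ys unfolding T1_def T_def by (cases ys) auto
    then show "W A (ys @ [v]) = count A (last ys, v) * W A ys"
      using W_snoc[of A a zs v] by simp
  next
    fix xs assume xs: "xs \<in> PS V u v"
    then have xs_eq: "butlast xs @ [v] = xs" using append_butlast_last_id[of xs] unfolding PS_def by auto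
    then show "butlast xs @ [v] = xs" .
    have ne: "butlast xs \<noteq> []"
    proof
      assume "butlast xs = []"
      then have "xs = [v]" using xs_eq by simp
      then show False using xs uv unfolding PS_def by simp
    qed
    have d: "distinct (butlast xs @ [v])" using xs xs_eq unfolding PS_def by simp
    have "hd xs = hd (butlast xs)" using hd_append2[OF ne, of "[v]"] xs_eq by simp
    then have "hd (butlast xs) = u" using xs unfolding PS_def by simp
    moreover have "set (butlast xs) \<subseteq> V" using xs in_set_butlastD[of _ xs] unfolding PS_def by blast
    ultimately show "butlast xs \<in> T1" using ne d unfolding T1_def T_def by auto
  qed
  finally show ?thesis unfolding npaths_PS by simp
qed

lemma npaths_rec:
  assumes "finite V" "set_mset A \<subseteq> V \<times> V" "acyclic (set_mset A)" "u \<in> V" "v \<in> V"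
  shows "npaths V A u v = (if u = v then 1 else (\<Sum>w\<in>V. count A (w, v) * npaths V A u w))"
  using npaths_self npaths_step assms by auto



lemma filter_single_count:
  assumes "filter_mset P A = {#e#}" "P (a, b)"
  shows "count A (a, b) = (if (a, b) = e then 1 else 0)"
proof -
  have "count A (a, b) = count (filter_mset P A) (a, b)" using assms(2) by simp
  also have "\<dots> = count {#e#} (a, b)" using assms(1) by (simp only:)
  finally show ?thesis by auto
qed

lemma in1:
  assumes "indeg A v = 1"
  shows "count A (w, v) = (if w = parent A v then 1 else 0)"
proof -
  obtain e where e: "filter_mset (\<lambda>e. snd e = v) A = {#e#}"
    using assms size_1_singleton_mset unfolding indeg_def by blast
  have "e \<in># filter_mset (\<lambda>e. snd e = v) A" using e by simp
  then have ein: "e \<in># A" "snd e = v" by auto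
  have cnt: "\<And>a. count A (a, v) = (if (a, v) = e then 1 else 0)"
    using filter_single_count[OF e] by simp
  have "parent A v = fst e"
    unfolding parent_def
  proof (rule some_equality)
    show "(fst e, v) \<in># A" using ein by (cases e) auto
    fix p assume "(p, v) \<in># A"
    then have "count A (p, v) \<noteq> 0" by simp
    then show "p = fst e" using cnt[of p] by (auto split: if_splits)
  qed
  then show ?thesis using cnt[of w] ein by (cases e) auto
qed

lemma out1:
  assumes "outdeg A v = 1"
  shows "count A (v, w) = (if w = child A v then 1 else 0)"
proof -
  obtain e where e: "filter_mset (\<lambda>e. fst e = v) A = {#e#}"
    using assms size_1_singleton_mset unfolding outdeg_def by blast
  have "e \<in># filter_mset (\<lambda>e. fst e = v) A" using e by simp
  then have ein: "e \<in># A" "fst e = v" by auto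
  have cnt: "\<And>a. count A (v, a) = (if (v, a) = e then 1 else 0)"
    using filter_single_count[OF e] by simp
  have "child A v = snd e"
    unfolding child_def
  proof (rule some_equality)
    show "(v, snd e) \<in># A" using ein by (cases e) auto
    fix p assume "(v, p) \<in># A"
    then have "count A (v, p) \<noteq> 0" by simp
    then show "p = snd e" using cnt[of p] by (auto split: if_splits)
  qed
  then show ?thesis using cnt[of w] ein by (cases e) auto
qed

lemma out0:
  assumes "outdeg A v = 0"
  shows "count A (v, w) = 0"
proof -
  have F: "filter_mset (\<lambda>e. fst e = v) A = {#}" using assms unfolding outdeg_def by (simp only: size_eq_0_iff_empty)
  have "count (filter_mset (\<lambda>e. fst e = v) A) (v, w) = 0" by (simp only: F count_empty)
  then show ?thesis by simp
qed

lemma two_mset: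
  assumes "size M = 2" "a \<in># M" "b \<in># M" "a \<noteq> b"
  shows "M = {#a, b#}"
proof -
  have M: "M = add_mset a (M - {#a#})" using assms(2) by simp
  have "b \<in># M - {#a#}" using assms by (simp add: in_diff_count)
  moreover have "size (M - {#a#}) = 1" using assms(1,2) by (simp add: size_Diff_singleton)
  ultimately have "M - {#a#} = {#b#}" using size_1_singleton_mset by fastforce
  then show ?thesis using M by simp
qed

lemma out2:
  assumes "outdeg A v = 2" "(v, a) \<in># A" "(v, b) \<in># A" "a \<noteq> b"
  shows "count A (v, w) = (if w = a then 1 else 0) + (if w = b then 1 else 0)"
proof -
  have "filter_mset (\<lambda>e. fst e = v) A = {#(v, a), (v, b)#}"
    using two_mset[of "filter_mset (\<lambda>e. fst e = v) A" "(v,a)" "(v,b)"] assms unfolding outdeg_def by auto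
  then have "count (filter_mset (\<lambda>e. fst e = v) A) (v, w) = count {#(v, a), (v, b)#} (v, w)" by simp
  then show ?thesis by auto
qed

lemma in2:
  assumes "indeg A v = 2" "(a, v) \<in># A" "(b, v) \<in># A" "a \<noteq> b"
  shows "count A (w, v) = (if w = a then 1 else 0) + (if w = b then 1 else 0)"
proof -
  have "filter_mset (\<lambda>e. snd e = v) A = {#(a, v), (b, v)#}"
    using two_mset[of "filter_mset (\<lambda>e. snd e = v) A" "(a,v)" "(b,v)"] assms unfolding indeg_def by auto
  then have "count (filter_mset (\<lambda>e. snd e = v) A) (w, v) = count {#(a, v), (b, v)#} (w, v)" by simp
  then show ?thesis by auto
qed

lemma in2_obtain:
  assumes "indeg A v = 2" "(a, v) \<in># A" "\<forall>e. count A e \<le> 1"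
  obtains b where "(b, v) \<in># A" "b \<noteq> a"
proof -
  let ?F = "filter_mset (\<lambda>e. snd e = v) A"
  have "(a, v) \<in># ?F" using assms by simp
  then have s: "size (?F - {#(a, v)#}) = 1" using assms(1) unfolding indeg_def by (simp add: size_Diff_singleton)
  then obtain e where e: "?F - {#(a, v)#} = {#e#}" using size_1_singleton_mset by blast
  then have ed: "e \<in># ?F - {#(a, v)#}" by simp
  then have "e \<in># ?F" by (rule in_diffD)
  then have ein1: "e \<in># A" "snd e = v" by auto
  have "e \<noteq> (a, v)"
  proof
    assume "e = (a, v)"
    then have "count {#(a,v)#} (a, v) < count ?F (a, v)" using ed by (simp only: in_diff_count)
    then show False using assms(3)[rule_format, of "(a,v)"] by simp
  qed
  then have ein: "e \<in># A" "snd e = v" "e \<noteq> (a, v)" using ein1 by auto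
  then show ?thesis using that[of "fst e"] by (cases e) auto
qed

lemma parent_eq:
  assumes "\<And>w. count A (w, v) = (if w = p then 1 else 0)"
  shows "parent A v = p"
  unfolding parent_def
proof (rule some_equality)
  have "0 < count A (p, v)" using assms[of p] by simp
  then show "(p, v) \<in># A" by simp
  fix q assume "(q, v) \<in># A"
  then show "q = p" using assms[of q] by (auto split: if_splits simp: count_eq_zero_iff)
qed

lemma child_eq:
  assumes "\<And>w. count A (v, w) = (if w = p then 1 else 0)"
  shows "child A v = p"
  unfolding child_def
proof (rule some_equality)
  have "0 < count A (v, p)" using assms[of p] by simp
  then show "(v, p) \<in># A" by simp
  fix q assume "(v, q) \<in># A"
  then show "q = p" using assms[of q] by (auto split: if_splits simp: count_eq_zero_iff)
qed

lemma deg_change: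
  assumes "R \<subseteq># A" "size (filter_mset P R) = size (filter_mset P Ad)"
  shows "size (filter_mset P (A - R + Ad)) = size (filter_mset P A)"
proof -
  have "filter_mset P R \<subseteq># filter_mset P A" using assms(1) by (rule multiset_filter_mono)
  then have "size (filter_mset P A - filter_mset P R) = size (filter_mset P A) - size (filter_mset P R)"
    by (simp add: size_Diff_submset)
  moreover have "size (filter_mset P R) \<le> size (filter_mset P A)"
    using \<open>filter_mset P R \<subseteq># filter_mset P A\<close> by (rule size_mset_mono)
  ultimately show ?thesis using assms(2) by simp
qed

lemma leaf_reach:
  assumes "\<And>w. count A (x, w) = 0" "(x, y) \<in> (set_mset A)\<^sup>*"
  shows "y = x"
  using assms(2)
proof (cases rule: converse_rtranclE)
  case (step c)
  then have "count A (x, c) \<noteq> 0" by simp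
  then show ?thesis using assms(1) by simp
qed simp

lemma sum_ind1:
  assumes "finite V" "p \<in> V"
  shows "(\<Sum>w\<in>V. (if w = p then 1 else 0) * f w) = (f p :: nat)"
proof -
  have "(\<Sum>w\<in>V. (if w = p then 1 else 0) * f w) = (\<Sum>w\<in>V. if w = p then f w else 0)"
    by (rule sum.cong) auto
  then show ?thesis using assms by simp
qed

lemma sum_ind2:
  assumes "finite V" "a \<in> V" "b \<in> V"
  shows "(\<Sum>w\<in>V. ((if w = a then 1 else 0) + (if w = b then 1 else 0)) * f w) = (f a + f b :: nat)"
proof -
  have "(\<Sum>w\<in>V. ((if w = a then 1 else 0) + (if w = b then 1 else 0)) * f w)
      = (\<Sum>w\<in>V. (if w = a then 1 else 0) * f w) + (\<Sum>w\<in>V. (if w = b then 1 else 0) * f w)"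
    by (simp add: sum.distrib distrib_right)
  then show ?thesis using sum_ind1[OF assms(1,2)] sum_ind1[OF assms(1,3)] by simp
qed



lemma pos_in: "count A e = Suc k \<Longrightarrow> e \<in># A"
  by (metis count_inI nat.distinct(1))

lemma acyclic_trancl': "acyclic r \<Longrightarrow> acyclic (r\<^sup>+)"
  unfolding acyclic_def by simp

lemma pn_facts:
  assumes "phylo_network n V A X"
  shows "finite V" "set_mset A \<subseteq> V \<times> V" "\<And>e. count A e \<le> 1" "acyclic (set_mset A)"
    "\<And>v. v \<in> V \<Longrightarrow> is_root A v \<or> is_leaf A v \<or> is_tree_node A v \<or> is_retic A v"
    "leaves V A = X" "X \<subseteq> {1..n}"
  using assms unfolding phylo_network_def by auto

lemma frame:
  assumes pn: "phylo_network n V A X"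
    and sub: "V' \<subseteq> V"
    and R: "R \<subseteq># A"
    and Asub: "set_mset (A - R + Ad) \<subseteq> V' \<times> V'"
    and Atr: "set_mset (A - R + Ad) \<subseteq> (set_mset A)\<^sup>+"
    and deg1: "\<And>v. v \<in> V' \<Longrightarrow> size (filter_mset (\<lambda>e. snd e = v) R) = size (filter_mset (\<lambda>e. snd e = v) Ad)"
    and deg2: "\<And>v. v \<in> V' \<Longrightarrow> size (filter_mset (\<lambda>e. fst e = v) R) = size (filter_mset (\<lambda>e. fst e = v) Ad)"
  shows "finite V'" "acyclic (set_mset (A - R + Ad))"
    "VT V' (A - R + Ad) = VT V A \<inter> V'" "VH V' (A - R + Ad) = VH V A \<inter> V'"
    "leaves V' (A - R + Ad) = leaves V A \<inter> V'"
proof -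
  note F = pn_facts[OF pn]
  show "finite V'" using F(1) sub finite_subset by blast
  show "acyclic (set_mset (A - R + Ad))"
    using acyclic_subset[OF acyclic_trancl'[OF F(4)] Atr] .
  have i: "indeg (A - R + Ad) v = indeg A v" if "v \<in> V'" for v
    unfolding indeg_def using deg_change[OF R deg1[OF that]] .
  have o: "outdeg (A - R + Ad) v = outdeg A v" if "v \<in> V'" for v
    unfolding outdeg_def using deg_change[OF R deg2[OF that]] .
  show "VT V' (A - R + Ad) = VT V A \<inter> V'" using i o sub
    unfolding VT_def is_leaf_def is_tree_node_def by auto
  show "VH V' (A - R + Ad) = VH V A \<inter> V'" using i o sub
    unfolding VH_def is_retic_def by auto
  show "leaves V' (A - R + Ad) = leaves V A \<inter> V'" using i o sub
    unfolding leaves_def is_leaf_def by auto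
qed




lemma cherry_case:
  assumes pn: "phylo_network n V A X" and ch: "is_cherry V A i j"
  shows "mu_multiset n (fst (cherry_reduce V A i j)) (snd (cherry_reduce V A i j))
           = cherry_red_ms (mu_multiset n V A) i j"
proof -
  note F = pn_facts[OF pn]
  define p where "p = parent A i"
  have ij: "i \<noteq> j" "i \<in> leaves V A" "j \<in> leaves V A" "parent A j = p"
    using ch p_def unfolding is_cherry_def by auto
  have iV: "i \<in> V" "is_leaf A i" and jV: "j \<in> V" "is_leaf A j" using ij unfolding leaves_def by auto
  have i1: "1 \<le> i" "i \<le> n" "1 \<le> j" "j \<le> n" using ij F(6,7) by auto
  have ci: "\<And>w. count A (w, i) = (if w = p then 1 else 0)"
    using in1[of A i] iV p_def unfolding is_leaf_def by auto
  have cj: "\<And>w. count A (w, j) = (if w = p then 1 else 0)"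
    using in1[of A j] jV ij unfolding is_leaf_def by auto
  have ci0: "\<And>w. count A (i, w) = 0" using out0 iV unfolding is_leaf_def by auto
  have cj0: "\<And>w. count A (j, w) = 0" using out0 jV unfolding is_leaf_def by auto
  have pi: "(p, i) \<in># A" using ci[of p] by (simp add: pos_in)
  have pj: "(p, j) \<in># A" using cj[of p] by (simp add: pos_in)
  have pV: "p \<in> V" using pi F(2) by auto
  have pni: "p \<noteq> i" "p \<noteq> j" using ci0[of i] ci[of p] cj0[of j] cj[of p] by auto
  have ptree: "is_tree_node A p"
  proof -
    have "outdeg A p \<noteq> 0" using out0[of A p i] ci[of p] by auto
    moreover have "outdeg A p \<noteq> 1"
    proof
      assume o: "outdeg A p = 1"
      have a: "count A (p, i) = (if i = child A p then 1 else 0)" using out1[OF o] .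
      have b: "count A (p, j) = (if j = child A p then 1 else 0)" using out1[OF o] .
      have c1: "count A (p, i) = 1" using ci[of p] by simp
      have c2: "count A (p, j) = 1" using cj[of p] by simp
      have "i = child A p"
      proof (rule ccontr)
        assume "i \<noteq> child A p"
        then have "count A (p, i) = 0" using a by simp
        then show False using c1 by simp
      qed
      moreover have "j = child A p"
      proof (rule ccontr)
        assume "j \<noteq> child A p"
        then have "count A (p, j) = 0" using b by simp
        then show False using c2 by simp
      qed
      ultimately show False using ij(1) by simp
    qed
    ultimately show ?thesis using F(5)[OF pV] unfolding is_root_def is_leaf_def is_retic_def by auto
  qed
  have cp: "\<And>w. count A (p, w) = (if w = i then 1 else 0) + (if w = j then 1 else 0)"
    using out2[of A p i j] ptree pi pj ij(1) unfolding is_tree_node_def by auto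
  define g where "g = parent A p"
  have cgp: "\<And>w. count A (w, p) = (if w = g then 1 else 0)"
    using in1[of A p] ptree g_def unfolding is_tree_node_def by auto
  have gp: "(g, p) \<in># A" using cgp[of g] by (simp add: pos_in)
  have gV: "g \<in> V" using gp F(2) by auto
  have gnp: "g \<noteq> p"
  proof
    assume "g = p"
    then have "(p, p) \<in> (set_mset A)\<^sup>+" using gp by auto
    then show False using F(4) unfolding acyclic_def by blast
  qed
  have gni: "g \<noteq> i" "g \<noteq> j" using ci0[of p] cj0[of p] cgp[of g] by auto
  define A0 where "A0 = A - {#(p, i)#}"
  have par0: "parent A0 p = g"
    by (rule parent_eq) (use pni gnp in \<open>auto simp: A0_def cgp\<close>)
  have ch0: "child A0 p = j"
    by (rule child_eq) (use ij(1) in \<open>auto simp: A0_def cp\<close>)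
  define R where "R = {#(p, i), (g, p), (p, j)#}"
  define Ad where "Ad = {#(g, j)#}"
  define V' where "V' = V - {i} - {p}"
  define A' where "A' = A - R + Ad"
  have red: "cherry_reduce V A i j = (V', A')"
    unfolding cherry_reduce_def suppress_def Let_def p_def[symmetric] A0_def[symmetric] par0 ch0
    by (simp add: A0_def V'_def A'_def R_def Ad_def add_mset_commute)
  have RA: "R \<subseteq># A"
    unfolding R_def using gnp gni pni ij(1) pi pj gp
    by (simp add: insert_subset_eq_iff in_diff_count ci cp cgp)
  have cA': "\<And>e. count A' e = count A e - count R e + count Ad e"
    unfolding A'_def by simp
  have dist: "i \<noteq> j" "j \<noteq> i" "p \<noteq> i" "i \<noteq> p" "p \<noteq> j" "j \<noteq> p" "g \<noteq> p" "p \<noteq> g"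
    "g \<noteq> i" "i \<noteq> g" "g \<noteq> j" "j \<noteq> g" using ij(1) pni gnp gni by auto
  have V'sub: "V' \<subseteq> V" unfolding V'_def by auto
  have gV': "g \<in> V'" and jV': "j \<in> V'" using gV jV dist unfolding V'_def by auto
  have Asub: "set_mset A' \<subseteq> V' \<times> V'"
  proof
    fix e assume ein: "e \<in># A'"
    obtain a b where e: "e = (a, b)" by (cases e)
    have "count A' (a, b) > 0" using ein e by simp
    then have pos: "count A (a, b) - count R (a, b) + count Ad (a, b) > 0" using cA' by simp
    show "e \<in> V' \<times> V'"
    proof (cases "(a, b) = (g, j)")
      case True then show ?thesis using e gV' jV' by auto
    next
      case False
      then have "count Ad (a, b) = 0" unfolding Ad_def by auto
      then have lt: "count R (a, b) < count A (a, b)" using pos by simp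
      then have "(a, b) \<in># A" by (simp add: count_inI)
      then have abV: "a \<in> V" "b \<in> V" using F(2) by auto
      have "a \<noteq> i" using lt by (auto simp: ci0)
      moreover have "b \<noteq> i"
      proof
        assume "b = i"
        with lt have lt': "count R (a, i) < count A (a, i)" by simp
        show False using lt' by (cases "a = p") (simp_all add: R_def ci dist)
      qed
      moreover have "a \<noteq> p"
      proof
        assume "a = p"
        with lt have lt': "count R (p, b) < count A (p, b)" by simp
        show False using lt' by (cases "b = i"; cases "b = j") (simp_all add: R_def cp dist)
      qed
      moreover have "b \<noteq> p"
      proof
        assume "b = p"
        with lt have lt': "count R (a, p) < count A (a, p)" by simp
        show False using lt' by (cases "a = g") (simp_all add: R_def cgp dist)
      qed
      ultimately show ?thesis using e abV unfolding V'_def by auto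
    qed
  qed
  have Atr: "set_mset A' \<subseteq> (set_mset A)\<^sup>+"
  proof
    fix e assume ein: "e \<in># A'"
    show "e \<in> (set_mset A)\<^sup>+"
    proof (cases "e = (g, j)")
      case True
      have "(g, p) \<in> (set_mset A)\<^sup>+" "(p, j) \<in> (set_mset A)\<^sup>+" using gp pj by auto
      then show ?thesis using True by (meson trancl_trans)
    next
      case False
      then have "count Ad e = 0" unfolding Ad_def by auto
      moreover have "0 < count A' e" using ein by simp
      ultimately have "count R e < count A e" using cA'[of e] by simp
      then have "e \<in># A" by (simp add: count_inI)
      then show ?thesis by (cases e) (simp add: r_into_trancl')
    qed
  qed
  have deg1: "size (filter_mset (\<lambda>e. snd e = v) R) = size (filter_mset (\<lambda>e. snd e = v) Ad)"
    if "v \<in> V'" for v using that dist unfolding R_def Ad_def V'_def by auto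
  have deg2: "size (filter_mset (\<lambda>e. fst e = v) R) = size (filter_mset (\<lambda>e. fst e = v) Ad)"
    if "v \<in> V'" for v using that dist unfolding R_def Ad_def V'_def by auto
  note fr = frame[OF pn V'sub RA Asub[unfolded A'_def] Atr[unfolded A'_def] deg1 deg2, folded A'_def]
  have finV': "finite V'" and acA': "acyclic (set_mset A')" using fr by auto
  have wf: "wf ((set_mset A)\<^sup>+)" using wf_trancl[OF finite_acyclic_wf[OF finite_set_mset F(4)]] .
  have cA'j: "\<And>w. count A' (w, j) = (if w = g then 1 else 0)"
    by (simp add: cA' R_def Ad_def cj dist)
  have cA'v: "\<And>w v. v \<noteq> i \<Longrightarrow> v \<noteq> p \<Longrightarrow> v \<noteq> j \<Longrightarrow> count A' (w, v) = count A (w, v)"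
    by (simp add: cA' R_def Ad_def)
  have gjt: "(g, j) \<in> (set_mset A)\<^sup>+" using gp pj by (meson r_into_trancl' trancl_into_trancl)
  have P: "npaths V' A' u v = npaths V A u v" if "v \<in> V'" "u \<in> V'" for u v
    using wf that
  proof (induction v arbitrary: u rule: wf_induct_rule)
    case (less v)
    have uV: "u \<in> V" "v \<in> V" using less.prems V'sub by auto
    have up: "u \<noteq> p" using less.prems unfolding V'_def by auto
    show ?case
    proof (cases "u = v")
      case True then show ?thesis using npaths_self less.prems uV by simp
    next
      case False
      have L: "npaths V' A' u v = (\<Sum>w\<in>V'. count A' (w, v) * npaths V' A' u w)"
        using npaths_step[OF finV' Asub acA' less.prems(2) less.prems(1) False] .
      have Rr: "npaths V A u v = (\<Sum>w\<in>V. count A (w, v) * npaths V A u w)"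
        using npaths_step[OF F(1) F(2) F(4) uV(1) uV(2) False] .
      show ?thesis
      proof (cases "v = j")
        case True
        have "npaths V' A' u v = npaths V' A' u g" using L True sum_ind1[OF finV' gV'] cA'j by simp
        also have "\<dots> = npaths V A u g" using less.IH[of g u] gV' less.prems True gjt by simp
        also have "\<dots> = npaths V A u p"
          using npaths_step[OF F(1) F(2) F(4) uV(1) pV up] sum_ind1[OF F(1) gV] cgp by simp
        also have "\<dots> = npaths V A u v" using Rr True sum_ind1[OF F(1) pV] cj by simp
        finally show ?thesis .
      next
        case False
        have vv: "v \<noteq> i" "v \<noteq> p" "v \<noteq> j" using less.prems False unfolding V'_def by auto
        have "npaths V' A' u v = (\<Sum>w\<in>V'. count A (w, v) * npaths V A u w)"
          unfolding L
        proof (rule sum.cong[OF refl])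
          fix w assume wV: "w \<in> V'"
          show "count A' (w, v) * npaths V' A' u w = count A (w, v) * npaths V A u w"
          proof (cases "count A (w, v) = 0")
            case True then show ?thesis using cA'v[OF vv] by simp
          next
            case False
            then have "(w, v) \<in> (set_mset A)\<^sup>+" by (simp add: count_inI r_into_trancl')
            then show ?thesis using less.IH[of w u] wV less.prems cA'v[OF vv] by simp
          qed
        qed
        also have "\<dots> = (\<Sum>w\<in>V. count A (w, v) * npaths V A u w)"
        proof (rule sum.mono_neutral_left[OF F(1) V'sub])
          show "\<forall>w\<in>V - V'. count A (w, v) * npaths V A u w = 0"
            using vv unfolding V'_def by (auto simp: ci0 cp)
        qed
        finally show ?thesis using Rr by simp
      qed
    qed
  qed
  have iVH: "i \<notin> VH V A" "p \<notin> VH V A" "j \<notin> VH V A"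
    using iV jV ptree unfolding VH_def is_retic_def is_leaf_def is_tree_node_def by auto
  have pL: "p \<notin> leaves V A" using ptree unfolding leaves_def is_leaf_def is_tree_node_def by auto
  have VHsub: "VH V A \<subseteq> V'" using iVH unfolding VH_def V'_def by auto
  have VH': "VH V' A' = VH V A" using fr(4) VHsub by auto
  have lv: "leaves V' A' = leaves V A - {i}" using fr(5) pL unfolding V'_def leaves_def by auto
  have lvV: "leaves V' A' \<subseteq> V'" unfolding leaves_def by auto
  have muE: "mu n V' A' u = (\<lambda>k. mu n V A u k - mu n V A u i * delta {i} k)" if uV': "u \<in> V'" for u
  proof (rule ext)
    fix k
    show "mu n V' A' u k = mu n V A u k - mu n V A u i * delta {i} k"
    proof (cases "k = 0")
      case True
      have "mu n V' A' u k = (\<Sum>h\<in>VH V A. npaths V' A' u h)" unfolding mu_def VH' using True by simp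
      also have "\<dots> = (\<Sum>h\<in>VH V A. npaths V A u h)"
        by (rule sum.cong[OF refl]) (use VHsub P uV' in auto)
      finally show ?thesis unfolding mu_def delta_def using True i1 by simp
    next
      case False
      show ?thesis
      proof (cases "k = i")
        case True then show ?thesis unfolding mu_def delta_def using False lv by simp
      next
        case ki: False
        have "k \<in> leaves V A \<Longrightarrow> k \<in> V'" using lv lvV ki by auto
        then show ?thesis unfolding mu_def delta_def using False ki lv P[of k u] uV' by auto
      qed
    qed
  qed
  have reach_i: "y = i" if "(i, y) \<in> (set_mset A)\<^sup>*" for y using leaf_reach[OF ci0 that] .
  have reach_j: "y = j" if "(j, y) \<in> (set_mset A)\<^sup>*" for y using leaf_reach[OF cj0 that] .
  have reach_p: "y = p \<or> y = i \<or> y = j" if "(p, y) \<in> (set_mset A)\<^sup>*" for y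
    using that
  proof (cases rule: converse_rtranclE)
    case (step c)
    then have "count A (p, c) \<noteq> 0" by simp
    then have "c = i \<or> c = j" using cp[of c] by (auto split: if_splits)
    then show ?thesis using step reach_i reach_j by auto
  qed simp
  have mui: "mu n V A i = delta {i}"
  proof (rule ext)
    fix k
    have z: "npaths V A i y = 0" if "y \<noteq> i" for y using npaths_reach reach_i that by blast
    have s0: "(\<Sum>h\<in>VH V A. npaths V A i h) = 0"
    proof (rule sum.neutral, intro ballI)
      fix h assume "h \<in> VH V A"
      then have "h \<noteq> i" using iVH by auto
      then show "npaths V A i h = 0" using z by simp
    qed
    show "mu n V A i k = delta {i} k"
      unfolding mu_def delta_def using s0 z[of k] npaths_self[OF iV(1)] i1 ij(2) by auto
  qed
  have mup: "mu n V A p = delta {i, j}"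
  proof (rule ext)
    fix k
    have z: "npaths V A p y = 0" if "y \<noteq> i" "y \<noteq> j" "y \<noteq> p" for y
      using npaths_reach reach_p that by blast
    have pi1: "npaths V A p i = 1"
      using npaths_step[OF F(1) F(2) F(4) pV iV(1) pni(1)] sum_ind1[OF F(1) pV] ci npaths_self[OF pV] by simp
    have pj1: "npaths V A p j = 1"
      using npaths_step[OF F(1) F(2) F(4) pV jV(1) pni(2)] sum_ind1[OF F(1) pV] cj npaths_self[OF pV] by simp
    have s0: "(\<Sum>h\<in>VH V A. npaths V A p h) = 0"
    proof (rule sum.neutral, intro ballI)
      fix h assume "h \<in> VH V A"
      then have "h \<noteq> i" "h \<noteq> j" "h \<noteq> p" using iVH by auto
      then show "npaths V A p h = 0" using z by simp
    qed
    show "mu n V A p k = delta {i, j} k"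
      unfolding mu_def delta_def using s0 z[of k] pi1 pj1 i1 ij(2,3) pL by auto
  qed
  have VT': "VT V' A' = VT V A - {i, p}" using fr(3) unfolding V'_def VT_def by auto
  have iVT: "{i, p} \<subseteq> VT V A" using iV pV ptree unfolding VT_def by auto
  have finVT: "finite (VT V A)" using F(1) unfolding VT_def by auto
  have ms: "mset_set (VT V A - {i, p}) = mset_set (VT V A) - {#i, p#}"
    using mset_set_Diff[OF finVT iVT] dist by simp
  have sub2: "{#i, p#} \<subseteq># mset_set (VT V A)"
    using subset_imp_msubset_mset_set[OF iVT finVT] dist by simp
  have "mu_multiset n V' A' = image_mset (\<lambda>u. (\<lambda>m k. m k - m i * delta {i} k) (mu n V A u)) (mset_set (VT V A - {i, p}))"
    unfolding mu_multiset_def VT'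
  proof (rule image_mset_cong)
    fix u assume "u \<in># mset_set (VT V A - {i, p})"
    then have "u \<in> V'" using finVT unfolding V'_def VT_def by auto
    then show "mu n V' A' u = (\<lambda>m k. m k - m i * delta {i} k) (mu n V A u)" using muE by simp
  qed
  also have "\<dots> = image_mset (\<lambda>m k. m k - m i * delta {i} k) (image_mset (mu n V A) (mset_set (VT V A - {i, p})))"
    by (simp add: multiset.map_comp comp_def)
  also have "image_mset (mu n V A) (mset_set (VT V A - {i, p})) = mu_multiset n V A - {#delta {i}, delta {i, j}#}"
    unfolding ms mu_multiset_def image_mset_Diff[OF sub2] using mui mup by simp
  finally show ?thesis unfolding red cherry_red_ms_def by simp
qed


lemma union_diff_swap:
  assumes "\<And>e. count Y e = 0 \<or> count Z e = 0"
  shows "(M :: 'a multiset) + Y - Z = M - Z + Y"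
proof (rule multiset_eqI)
  fix e show "count (M + Y - Z) e = count (M - Z + Y) e" using assms[of e] by auto
qed

lemma retic_case:
  assumes pn: "phylo_network n V A X" and rc: "is_retic_cherry V A i j"
  shows "mu_multiset n (fst (retic_reduce V A i j)) (snd (retic_reduce V A i j))
           = retic_red_ms (mu_multiset n V A) i j"
proof -
  note F = pn_facts[OF pn]
  define r where "r = parent A i"
  define t where "t = parent A j"
  have ij: "i \<noteq> j" "i \<in> leaves V A" "j \<in> leaves V A" "is_retic A r" "is_tree_node A t" "(t, r) \<in># A"
    using rc r_def t_def unfolding is_retic_cherry_def by auto
  have iV: "i \<in> V" "is_leaf A i" and jV: "j \<in> V" "is_leaf A j" using ij unfolding leaves_def by auto
  have i1: "1 \<le> i" "i \<le> n" "1 \<le> j" "j \<le> n" using ij F(6,7) by auto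
  have ci: "\<And>w. count A (w, i) = (if w = r then 1 else 0)"
    using in1[of A i] iV r_def unfolding is_leaf_def by auto
  have cj: "\<And>w. count A (w, j) = (if w = t then 1 else 0)"
    using in1[of A j] jV t_def unfolding is_leaf_def by auto
  have ci0: "\<And>w. count A (i, w) = 0" using out0 iV unfolding is_leaf_def by auto
  have cj0: "\<And>w. count A (j, w) = 0" using out0 jV unfolding is_leaf_def by auto
  have ri: "(r, i) \<in># A" using ci[of r] by (simp add: pos_in)
  have tj: "(t, j) \<in># A" using cj[of t] by (simp add: pos_in)
  have rV: "r \<in> V" using ri F(2) by auto
  have tV: "t \<in> V" using tj F(2) by auto
  have d1: "r \<noteq> t" "r \<noteq> i" "r \<noteq> j" "t \<noteq> i" "t \<noteq> j"
    using ij(4,5) iV jV unfolding is_retic_def is_tree_node_def is_leaf_def by auto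
  have cr_out: "\<And>w. count A (r, w) = (if w = i then 1 else 0)"
  proof -
    have o: "outdeg A r = 1" using ij(4) unfolding is_retic_def by simp
    have a: "count A (r, i) = (if i = child A r then 1 else 0)" using out1[OF o] .
    have c1: "count A (r, i) = 1" using ci[of r] by simp
    have "i = child A r"
    proof (rule ccontr)
      assume "i \<noteq> child A r"
      then have "count A (r, i) = 0" using a by simp
      then show False using c1 by simp
    qed
    then show "\<And>w. count A (r, w) = (if w = i then 1 else 0)" using out1[OF o] by simp
  qed
  have ct_out: "\<And>w. count A (t, w) = (if w = j then 1 else 0) + (if w = r then 1 else 0)"
    using out2[of A t j r] ij(5,6) tj d1 unfolding is_tree_node_def by auto
  obtain q where qr: "(q, r) \<in># A" "q \<noteq> t"
    using in2_obtain[of A r t] ij(4,6) F(3) unfolding is_retic_def by blast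
  have cr_in: "\<And>w. count A (w, r) = (if w = t then 1 else 0) + (if w = q then 1 else 0)"
    using in2[of A r t q] ij(4,6) qr unfolding is_retic_def by auto
  have qV: "q \<in> V" using qr F(2) by auto
  define g where "g = parent A t"
  have cgt: "\<And>w. count A (w, t) = (if w = g then 1 else 0)"
    using in1[of A t] ij(5) g_def unfolding is_tree_node_def by auto
  have gt: "(g, t) \<in># A" using cgt[of g] by (simp add: pos_in)
  have gV: "g \<in> V" using gt F(2) by auto
  have gnt: "g \<noteq> t"
  proof
    assume "g = t"
    then have "(t, t) \<in> (set_mset A)\<^sup>+" using gt by auto
    then show False using F(4) unfolding acyclic_def by blast
  qed
  have qnr: "q \<noteq> r"
  proof
    assume "q = r"
    then have "(r, r) \<in> (set_mset A)\<^sup>+" using qr by auto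
    then show False using F(4) unfolding acyclic_def by blast
  qed
  have d2: "q \<noteq> i" "q \<noteq> j" using ci0[of r] cj0[of r] cr_in[of q] qr(2) by auto
  have d3: "g \<noteq> r" "g \<noteq> i" "g \<noteq> j" using cr_out[of t] ci0[of t] cj0[of t] cgt[of g] d1 by auto
  have dist: "i \<noteq> j" "j \<noteq> i" "r \<noteq> t" "t \<noteq> r" "r \<noteq> i" "i \<noteq> r" "r \<noteq> j" "j \<noteq> r"
    "t \<noteq> i" "i \<noteq> t" "t \<noteq> j" "j \<noteq> t" "q \<noteq> t" "t \<noteq> q" "q \<noteq> r" "r \<noteq> q"
    "q \<noteq> i" "i \<noteq> q" "q \<noteq> j" "j \<noteq> q" "g \<noteq> t" "t \<noteq> g" "g \<noteq> r" "r \<noteq> g"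
    "g \<noteq> i" "i \<noteq> g" "g \<noteq> j" "j \<noteq> g"
    using ij(1) d1 qr(2) qnr d2 gnt d3 by auto
  define A0 where "A0 = A - {#(t, r)#}"
  have par0: "parent A0 r = q"
    by (rule parent_eq) (use dist in \<open>auto simp: A0_def cr_in\<close>)
  have ch0: "child A0 r = i"
    by (rule child_eq) (use dist in \<open>auto simp: A0_def cr_out\<close>)
  define A1 where "A1 = A0 - {#(q, r), (r, i)#} + {#(q, i)#}"
  have par1: "parent A1 t = g"
    by (rule parent_eq) (use dist in \<open>auto simp: A1_def A0_def cgt\<close>)
  have ch1: "child A1 t = j"
    by (rule child_eq) (use dist in \<open>auto simp: A1_def A0_def ct_out\<close>)
  define R where "R = {#(t, r), (q, r), (r, i), (g, t), (t, j)#}"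
  define Ad where "Ad = {#(q, i), (g, j)#}"
  define V' where "V' = V - {r} - {t}"
  define A' where "A' = A - R + Ad"
  have sw: "A0 - {#(q, r), (r, i)#} + {#(q, i)#} - {#(g, t), (t, j)#}
      = A0 - {#(q, r), (r, i)#} - {#(g, t), (t, j)#} + {#(q, i)#}"
    by (rule union_diff_swap) (use dist in auto)
  have red: "retic_reduce V A i j = (V', A')"
    unfolding retic_reduce_def suppress_def Let_def r_def[symmetric] t_def[symmetric] A0_def[symmetric]
      par0 ch0 fst_conv snd_conv A1_def[symmetric] par1 ch1
    unfolding A1_def sw
    by (simp add: A0_def V'_def A'_def R_def Ad_def add_mset_commute)
  have RA: "R \<subseteq># A"
    unfolding R_def using dist ri tj gt qr ij(6)
    by (simp add: insert_subset_eq_iff in_diff_count ci cr_in cgt ct_out)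
  have cA': "\<And>e. count A' e = count A e - count R e + count Ad e"
    unfolding A'_def by simp
  have V'sub: "V' \<subseteq> V" unfolding V'_def by auto
  have gV': "g \<in> V'" and jV': "j \<in> V'" and iV': "i \<in> V'" and qV': "q \<in> V'"
    using gV jV iV qV dist unfolding V'_def by auto
  have Asub: "set_mset A' \<subseteq> V' \<times> V'"
  proof
    fix e assume ein: "e \<in># A'"
    obtain a b where e: "e = (a, b)" by (cases e)
    have "count A' (a, b) > 0" using ein e by simp
    then have pos: "count A (a, b) - count R (a, b) + count Ad (a, b) > 0" using cA' by simp
    show "e \<in> V' \<times> V'"
    proof (cases "(a, b) = (g, j) \<or> (a, b) = (q, i)")
      case True then show ?thesis using e gV' jV' iV' qV' by auto
    next
      case False
      then have "count Ad (a, b) = 0" unfolding Ad_def by auto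
      then have lt: "count R (a, b) < count A (a, b)" using pos by simp
      then have "(a, b) \<in># A" by (simp add: count_inI)
      then have abV: "a \<in> V" "b \<in> V" using F(2) by auto
      have "a \<noteq> r"
      proof
        assume "a = r"
        with lt have lt': "count R (r, b) < count A (r, b)" by simp
        show False using lt' by (cases "b = i") (simp_all add: R_def cr_out dist)
      qed
      moreover have "b \<noteq> r"
      proof
        assume "b = r"
        with lt have lt': "count R (a, r) < count A (a, r)" by simp
        show False using lt' by (cases "a = t"; cases "a = q") (simp_all add: R_def cr_in dist)
      qed
      moreover have "a \<noteq> t"
      proof
        assume "a = t"
        with lt have lt': "count R (t, b) < count A (t, b)" by simp
        show False using lt' by (cases "b = j"; cases "b = r") (simp_all add: R_def ct_out dist)
      qed
      moreover have "b \<noteq> t"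
      proof
        assume "b = t"
        with lt have lt': "count R (a, t) < count A (a, t)" by simp
        show False using lt' by (cases "a = g") (simp_all add: R_def cgt dist)
      qed
      ultimately show ?thesis using e abV unfolding V'_def by auto
    qed
  qed
  have Atr: "set_mset A' \<subseteq> (set_mset A)\<^sup>+"
  proof
    fix e assume ein: "e \<in># A'"
    show "e \<in> (set_mset A)\<^sup>+"
    proof (cases "e = (g, j) \<or> e = (q, i)")
      case True
      have "(g, t) \<in> (set_mset A)\<^sup>+" "(t, j) \<in> (set_mset A)\<^sup>+" "(q, r) \<in> (set_mset A)\<^sup>+"
        "(r, i) \<in> (set_mset A)\<^sup>+" using gt tj qr ri by auto
      then show ?thesis using True by (meson trancl_trans)
    next
      case False
      then have "count Ad e = 0" unfolding Ad_def by auto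
      moreover have "0 < count A' e" using ein by simp
      ultimately have "count R e < count A e" using cA'[of e] by simp
      then have "e \<in># A" by (simp add: count_inI)
      then show ?thesis by (cases e) (simp add: r_into_trancl')
    qed
  qed
  have deg1: "size (filter_mset (\<lambda>e. snd e = v) R) = size (filter_mset (\<lambda>e. snd e = v) Ad)"
    if "v \<in> V'" for v using that dist unfolding R_def Ad_def V'_def by auto
  have deg2: "size (filter_mset (\<lambda>e. fst e = v) R) = size (filter_mset (\<lambda>e. fst e = v) Ad)"
    if "v \<in> V'" for v using that dist unfolding R_def Ad_def V'_def by auto
  note fr = frame[OF pn V'sub RA Asub[unfolded A'_def] Atr[unfolded A'_def] deg1 deg2, folded A'_def]
  have finV': "finite V'" and acA': "acyclic (set_mset A')" using fr by auto
  have wf: "wf ((set_mset A)\<^sup>+)" using wf_trancl[OF finite_acyclic_wf[OF finite_set_mset F(4)]] .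
  have cA'j: "\<And>w. count A' (w, j) = (if w = g then 1 else 0)"
    by (simp add: cA' R_def Ad_def cj dist)
  have cA'i: "\<And>w. count A' (w, i) = (if w = q then 1 else 0)"
    by (simp add: cA' R_def Ad_def ci dist)
  have cA'v: "\<And>w v. v \<noteq> i \<Longrightarrow> v \<noteq> r \<Longrightarrow> v \<noteq> j \<Longrightarrow> v \<noteq> t \<Longrightarrow> count A' (w, v) = count A (w, v)"
    by (simp add: cA' R_def Ad_def)
  have gjt: "(g, j) \<in> (set_mset A)\<^sup>+" using gt tj by (meson r_into_trancl' trancl_into_trancl)
  have P: "npaths V' A' u v = npaths V A u v" if "v \<in> V'" "v \<noteq> i" "u \<in> V'" for u v
    using wf that
  proof (induction v arbitrary: u rule: wf_induct_rule)
    case (less v)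
    have uV: "u \<in> V" "v \<in> V" using less.prems V'sub by auto
    have ut: "u \<noteq> t" using less.prems unfolding V'_def by auto
    show ?case
    proof (cases "u = v")
      case True then show ?thesis using npaths_self less.prems uV by simp
    next
      case False
      have L: "npaths V' A' u v = (\<Sum>w\<in>V'. count A' (w, v) * npaths V' A' u w)"
        using npaths_step[OF finV' Asub acA' less.prems(3) less.prems(1) False] .
      have Rr: "npaths V A u v = (\<Sum>w\<in>V. count A (w, v) * npaths V A u w)"
        using npaths_step[OF F(1) F(2) F(4) uV(1) uV(2) False] .
      show ?thesis
      proof (cases "v = j")
        case True
        have "npaths V' A' u v = npaths V' A' u g" using L True sum_ind1[OF finV' gV'] cA'j by simp
        also have "\<dots> = npaths V A u g" using less.IH[of g u] gV' less.prems True gjt dist by simp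
        also have "\<dots> = npaths V A u t"
          using npaths_step[OF F(1) F(2) F(4) uV(1) tV ut] sum_ind1[OF F(1) gV] cgt by simp
        also have "\<dots> = npaths V A u v" using Rr True sum_ind1[OF F(1) tV] cj by simp
        finally show ?thesis .
      next
        case False
        have vv: "v \<noteq> i" "v \<noteq> r" "v \<noteq> j" "v \<noteq> t" using less.prems False unfolding V'_def by auto
        have "npaths V' A' u v = (\<Sum>w\<in>V'. count A (w, v) * npaths V A u w)"
          unfolding L
        proof (rule sum.cong[OF refl])
          fix w assume wV: "w \<in> V'"
          show "count A' (w, v) * npaths V' A' u w = count A (w, v) * npaths V A u w"
          proof (cases "count A (w, v) = 0")
            case True then show ?thesis using cA'v[OF vv] by simp
          next
            case False
            then have "(w, v) \<in> (set_mset A)\<^sup>+" by (simp add: count_inI r_into_trancl')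
            moreover have "w \<noteq> i"
            proof
              assume "w = i"
              then show False using False ci0[of v] by simp
            qed
            ultimately show ?thesis using less.IH[of w u] wV less.prems cA'v[OF vv] by simp
          qed
        qed
        also have "\<dots> = (\<Sum>w\<in>V. count A (w, v) * npaths V A u w)"
        proof (rule sum.mono_neutral_left[OF F(1) V'sub])
          show "\<forall>w\<in>V - V'. count A (w, v) * npaths V A u w = 0"
            using vv unfolding V'_def by (auto simp: cr_out ct_out)
        qed
        finally show ?thesis using Rr by simp
      qed
    qed
  qed
  have reach_i: "y = i" if "(i, y) \<in> (set_mset A)\<^sup>*" for y using leaf_reach[OF ci0 that] .
  have reach_j: "y = j" if "(j, y) \<in> (set_mset A)\<^sup>*" for y using leaf_reach[OF cj0 that] .
  have reach_r: "y = r \<or> y = i" if "(r, y) \<in> (set_mset A)\<^sup>*" for y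
    using that
  proof (cases rule: converse_rtranclE)
    case (step c)
    then have "count A (r, c) \<noteq> 0" by simp
    then have "c = i" using cr_out[of c] by (auto split: if_splits)
    then show ?thesis using step reach_i by auto
  qed simp
  have reach_t: "y = t \<or> y = j \<or> y = r \<or> y = i" if "(t, y) \<in> (set_mset A)\<^sup>*" for y
    using that
  proof (cases rule: converse_rtranclE)
    case (step c)
    then have "count A (t, c) \<noteq> 0" by simp
    then have "c = j \<or> c = r" using ct_out[of c] by (auto split: if_splits)
    then show ?thesis using step reach_j reach_r by auto
  qed simp
  have zi: "npaths V A i y = 0" if "y \<noteq> i" for y using npaths_reach reach_i that by blast
  have zj: "npaths V A j y = 0" if "y \<noteq> j" for y using npaths_reach reach_j that by blast
  have zt: "npaths V A t y = 0" if "y \<noteq> t" "y \<noteq> j" "y \<noteq> r" "y \<noteq> i" for y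
    using npaths_reach reach_t that by blast
  have iVH: "i \<notin> VH V A" "t \<notin> VH V A" "j \<notin> VH V A" "r \<in> VH V A"
    using iV jV ij(4,5) rV unfolding VH_def is_retic_def is_leaf_def is_tree_node_def by auto
  have tL: "t \<notin> leaves V A" "r \<notin> leaves V A"
    using ij(4,5) unfolding leaves_def is_leaf_def is_tree_node_def is_retic_def by auto
  have finVH: "finite (VH V A)" using F(1) unfolding VH_def by auto
  have VH': "VH V' A' = VH V A - {r}" using fr(4) iVH unfolding V'_def VH_def by auto
  have lv: "leaves V' A' = leaves V A" using fr(5) tL unfolding V'_def leaves_def by auto
  have lvV: "leaves V' A' \<subseteq> V'" unfolding leaves_def by auto
  have Pi: "npaths V' A' u i = npaths V A u i - npaths V A u j" if uV': "u \<in> V'" for u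
  proof (cases "u = i")
    case True
    then show ?thesis using npaths_self[OF iV'] npaths_self[OF iV(1)] zi[of j] dist by simp
  next
    case False
    have uV: "u \<in> V" "u \<noteq> r" "u \<noteq> t" using uV' unfolding V'_def by auto
    have "npaths V' A' u i = npaths V' A' u q"
      using npaths_step[OF finV' Asub acA' uV' iV' False] sum_ind1[OF finV' qV'] cA'i by simp
    also have "\<dots> = npaths V A u q" using P[OF qV' _ uV'] dist by simp
    finally have L: "npaths V' A' u i = npaths V A u q" .
    have ui: "npaths V A u i = npaths V A u r"
      using npaths_step[OF F(1) F(2) F(4) uV(1) iV(1) False] sum_ind1[OF F(1) rV] ci by simp
    have ur: "npaths V A u r = npaths V A u t + npaths V A u q"
      using npaths_step[OF F(1) F(2) F(4) uV(1) rV uV(2)] sum_ind2[OF F(1) tV qV] cr_in by simp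
    show ?thesis
    proof (cases "u = j")
      case True
      have "npaths V A j q = 0" "npaths V A j t = 0" using zj dist by auto
      then show ?thesis using L ui ur True npaths_self[OF jV(1)] by simp
    next
      case uj: False
      have "npaths V A u j = npaths V A u t"
        using npaths_step[OF F(1) F(2) F(4) uV(1) jV(1) uj] sum_ind1[OF F(1) tV] cj by simp
      then show ?thesis using L ui ur by simp
    qed
  qed
  have muE: "mu n V' A' u = (\<lambda>k. mu n V A u k - mu n V A u i * delta {0} k - mu n V A u j * delta {i} k)"
    if uV': "u \<in> V'" for u
  proof (rule ext)
    fix k
    have uV: "u \<in> V" "u \<noteq> r" using uV' unfolding V'_def by auto
    show "mu n V' A' u k = mu n V A u k - mu n V A u i * delta {0} k - mu n V A u j * delta {i} k"
    proof (cases "k = 0")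
      case True
      define S where "S = (\<Sum>h\<in>VH V A - {r}. npaths V A u h)"
      have "mu n V' A' u k = (\<Sum>h\<in>VH V A - {r}. npaths V' A' u h)" unfolding mu_def VH' using True by simp
      also have "\<dots> = S" unfolding S_def
      proof (rule sum.cong[OF refl])
        fix h assume h: "h \<in> VH V A - {r}"
        then have "h \<in> V'" "h \<noteq> i" using iVH unfolding VH_def V'_def by auto
        then show "npaths V' A' u h = npaths V A u h" using P uV' by simp
      qed
      finally have L: "mu n V' A' u k = S" .
      have tot: "(\<Sum>h\<in>VH V A. npaths V A u h) = npaths V A u r + S"
        unfolding S_def using sum.remove[OF finVH iVH(4)] by simp
      have R: "mu n V A u k - mu n V A u i * delta {0} k - mu n V A u j * delta {i} k
          = (npaths V A u r + S) - npaths V A u i"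
        unfolding mu_def delta_def using True tot i1 ij(2) by simp
      show ?thesis
      proof (cases "u = i")
        case True
        have "S = 0" unfolding S_def
        proof (rule sum.neutral, intro ballI)
          fix h assume "h \<in> VH V A - {r}"
          then have "h \<noteq> i" using iVH by auto
          then show "npaths V A u h = 0" using zi True by simp
        qed
        moreover have "npaths V A u r = 0" using zi[of r] dist True by simp
        ultimately show ?thesis using L R by simp
      next
        case False
        have "npaths V A u i = npaths V A u r"
          using npaths_step[OF F(1) F(2) F(4) uV(1) iV(1) False] sum_ind1[OF F(1) rV] ci by simp
        then show ?thesis using L R by simp
      qed
    next
      case False
      show ?thesis
      proof (cases "k = i")
        case True then show ?thesis unfolding mu_def delta_def using False lv Pi[OF uV'] i1 ij(2,3) dist by simp
      next
        case ki: False
        have "k \<in> leaves V A \<Longrightarrow> k \<in> V'" using lv lvV by auto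
        then show ?thesis unfolding mu_def delta_def using False ki lv P[of k u] uV' by auto
      qed
    qed
  qed
  have mut: "mu n V A t = delta {0, i, j}"
  proof (rule ext)
    fix k
    have tt: "npaths V A t t = 1" using npaths_self[OF tV] .
    have tj1: "npaths V A t j = 1"
      using npaths_step[OF F(1) F(2) F(4) tV jV(1) dist(11)] sum_ind1[OF F(1) tV] cj tt by simp
    have tq: "npaths V A t q = 0" using zt dist by simp
    have tr1: "npaths V A t r = 1"
      using npaths_step[OF F(1) F(2) F(4) tV rV dist(4)] sum_ind2[OF F(1) tV qV] cr_in tt tq by simp
    have ti1: "npaths V A t i = 1"
      using npaths_step[OF F(1) F(2) F(4) tV iV(1) dist(9)] sum_ind1[OF F(1) rV] ci tr1 by simp
    have s0: "(\<Sum>h\<in>VH V A - {r}. npaths V A t h) = 0"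
    proof (rule sum.neutral, intro ballI)
      fix h assume "h \<in> VH V A - {r}"
      then have "h \<noteq> i" "h \<noteq> j" "h \<noteq> t" "h \<noteq> r" using iVH by auto
      then show "npaths V A t h = 0" using zt by simp
    qed
    have s: "(\<Sum>h\<in>VH V A. npaths V A t h) = 1"
      using sum.remove[OF finVH iVH(4), of "npaths V A t"] s0 tr1 by simp
    show "mu n V A t k = delta {0, i, j} k"
      unfolding mu_def delta_def using s zt[of k] ti1 tj1 i1 ij(2,3) tL by auto
  qed
  have rVT: "r \<notin> VT V A" using ij(4) unfolding VT_def is_leaf_def is_tree_node_def is_retic_def by auto
  have VTV: "VT V A \<subseteq> V" unfolding VT_def by auto
  have VT': "VT V' A' = VT V A - {t}" using fr(3) rVT VTV unfolding V'_def by blast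
  have tVT: "t \<in> VT V A" using tV ij(5) unfolding VT_def by auto
  have finVT: "finite (VT V A)" using F(1) unfolding VT_def by auto
  have ms: "mset_set (VT V A - {t}) = mset_set (VT V A) - {#t#}"
    using mset_set_Diff[of "VT V A" "{t}"] finVT tVT by simp
  have sub1: "{#t#} \<subseteq># mset_set (VT V A)" using tVT finVT by simp
  let ?G = "\<lambda>m k. m k - m i * delta {0} k - m j * delta {i} k"
  have "mu_multiset n V' A' = image_mset (\<lambda>u. ?G (mu n V A u)) (mset_set (VT V A - {t}))"
    unfolding mu_multiset_def VT'
  proof (rule image_mset_cong)
    fix u assume "u \<in># mset_set (VT V A - {t})"
    then have "u \<in> VT V A - {t}" using finVT by simp
    then have "u \<in> V'" using rVT VTV unfolding V'_def by blast
    then show "mu n V' A' u = ?G (mu n V A u)" using muE by simp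
  qed
  also have "\<dots> = image_mset ?G (image_mset (mu n V A) (mset_set (VT V A - {t})))"
    by (simp add: multiset.map_comp comp_def)
  also have "image_mset (mu n V A) (mset_set (VT V A - {t})) = mu_multiset n V A - {#delta {0, i, j}#}"
    unfolding ms mu_multiset_def image_mset_Diff[OF sub1] using mut by simp
  finally show ?thesis unfolding red retic_red_ms_def by simp
qed

theorem mainTheorem7:
  fixes n :: nat and V X :: "nat set" and A :: "(nat \<times> nat) multiset" and i j :: nat
  assumes "phylo_network n V A X"
    and "is_cherry V A i j \<or> is_retic_cherry V A i j"
  shows "mu_multiset n (fst (net_reduce V A i j)) (snd (net_reduce V A i j))
           = mu_reduce V A i j (mu_multiset n V A)"
proof (cases "is_cherry V A i j")
  case True
  then show ?thesis unfolding net_reduce_def mu_reduce_def using cherry_case[OF assms(1) True] by simp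
next
  case False
  then have "is_retic_cherry V A i j" using assms(2) by simp
  then show ?thesis unfolding net_reduce_def mu_reduce_def using retic_case[OF assms(1)] False by simp
qed

end
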